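(* Let $I$, $\tilde I$, $h$, $h_A$ satisfy the compatibility assumption in the context, and let $\Rightarrow_t$, $\Rightarrow_e$ be as in the context with the witness set $W_{\tilde s'}$ taken to be the set of all temporal paths of $\tilde I$ from a state of $\tilde S_0$ to $\tilde s'$. Let $\tilde\pi=\tilde s_1\to\cdots\to\tilde s_n$ be a path in $\tilde I$ with temporal edges $\tilde s_k\xrightarrow{\tilde\alpha_{k+1}}\tilde s_{k+1}$ and/or epistemic edges $\tilde s_k\sim_a\tilde s_{k+1}$. Suppose there are concrete states $s_1,\dots,s_n$ with $h(s_k)=\tilde s_k$ for all $k$ such that for each temporal edge $\tau(\alpha_{k+1},s_k)=s_{k+1}$ for some $\alpha_{k+1}$ with $h_A(\alpha_{k+1})=\tilde\alpha_{k+1}$, and for each epistemic edge $l_a(s_k)=l_a(s_{k+1})$ and $s_{k+1}$ is reachable in $I$. If $s_1\in st_1\subseteq h^{-1}(\tilde s_1)$, then $(\tilde\pi,st_1)\Rightarrow^*(\tilde s_n,st_n)$ for some $st_n$ with $s_n\in st_n$; in particular $st_n\neq\emptyset$.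
   Context: $I$ and $\tilde I$ are interpreted systems over the same agents (global states $S,\tilde S$ with $l_a(s)$ the local state of agent $a$; initial states $S_0,\tilde S_0$; partial transition functions $\tau,\tilde\tau$); a state of $I$ is reachable if obtained from $S_0$ by finitely many transitions. $h:S\to\tilde S$ and $h_A:ACT\to\widetilde{ACT}$ are given functions satisfying the compatibility assumption: $h(S_0)\subseteq\tilde S_0$, and whenever $\tau(\alpha,s)$ is defined, $\tilde\tau(h_A(\alpha),h(s))=h(\tau(\alpha,s))$ (this holds for the variable-hiding abstraction of the paper). For $st\subseteq S$ let $L_a(st)=\{l_a(s)\mid s\in st\}$ and $\Theta_\alpha(st)=\{\tau(\alpha,s)\mid s\in st,\ \tau(\alpha,s)\text{ defined}\}$. Paths in $\tilde I$ are written with first edge followed by the rest: $e\,\|\,\pi$; a path of length zero is a state. Rule TemporalCheck: $(\tilde s\xrightarrow{\tilde\alpha}\tilde s'\,\|\,\pi,st)\Rightarrow_t(\pi,\bigcup_{\alpha\in h_A^{-1}(\tilde\alpha)}\Theta_\alpha(st)\cap h^{-1}(\tilde s'))$; $\Rightarrow_t^*$ is a finite sequence of such steps. Rule EpistemicCheck: given a set $W_{\tilde s'}$ of temporal paths $\pi'=\tilde s'_0\xrightarrow{\tilde\alpha'_1}\cdots\xrightarrow{\tilde\alpha'_m}\tilde s'$ with $\tilde s'_0\in\tilde S_0$, let $st'=\bigcup_{\pi'\in W_{\tilde s'}}\{X\mid(\pi',S_0\cap h^{-1}(\tilde s'_0))\Rightarrow_t^*(\tilde s',X)\}$; then $(\tilde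 s\sim_a\tilde s'\,\|\,\pi,st)\Rightarrow_e(\pi,\hat{st})$ with $\hat{st}=\{s\in st'\mid l_a(s)\in L_a(st)\}$. $\Rightarrow^*$ denotes a finite sequence of $\Rightarrow_t$ and $\Rightarrow_e$ steps. *)

theory Defs
  imports Main
begin

text \<open>An interpreted system is given by its initial states S0 (a set of global
states; the global state space is the whole type), a partial transition
function tau (None = undefined) and local-state functions l a.\<close>

inductive_set reachable :: "'s set \<Rightarrow> ('act \<Rightarrow> 's \<Rightarrow> 's option) \<Rightarrow> 's set"
  for S0 tau where
  init: "s \<in> S0 \<Longrightarrow> s \<in> reachable S0 tau"
| step: "s \<in> reachable S0 tau \<Longrightarrow> tau \<alpha> s = Some s' \<Longrightarrow> s' \<in> reachable S0 tau"

datatype ('aact, 'ag) elabel = Temp 'aact | Epi 'ag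

text \<open>A path is a first state followed by a list of (label, next state) edges.
A path of length zero is (s, []).\<close>
type_synonym ('t, 'aact, 'ag) apath = "'t \<times> (('aact, 'ag) elabel \<times> 't) list"

definition path_states :: "('t, 'aact, 'ag) apath \<Rightarrow> 't list" where
  "path_states p = fst p # map snd (snd p)"

fun valid_path :: "('aact \<Rightarrow> 't \<Rightarrow> 't option) \<Rightarrow> ('ag \<Rightarrow> 't \<Rightarrow> 'lt)
    \<Rightarrow> 't \<Rightarrow> (('aact, 'ag) elabel \<times> 't) list \<Rightarrow> bool" where
  "valid_path taut lt s [] = True"
| "valid_path taut lt s ((Temp a, s') # es) = (taut a s = Some s' \<and> valid_path taut lt s' es)"
| "valid_path taut lt s ((Epi ag, s') # es) = (lt ag s = lt ag s' \<and> valid_path taut lt s' es)"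

definition temporal_paths :: "'t set \<Rightarrow> ('aact \<Rightarrow> 't \<Rightarrow> 't option) \<Rightarrow> ('ag \<Rightarrow> 't \<Rightarrow> 'lt)
    \<Rightarrow> 't \<Rightarrow> ('t, 'aact, 'ag) apath set" where
  "temporal_paths S0t taut lt st' =
     {p. fst p \<in> S0t \<and> valid_path taut lt (fst p) (snd p)
         \<and> (\<forall>e \<in> set (snd p). \<exists>a. fst e = Temp a)
         \<and> last (path_states p) = st'}"

definition Theta :: "('act \<Rightarrow> 's \<Rightarrow> 's option) \<Rightarrow> 'act \<Rightarrow> 's set \<Rightarrow> 's set" where
  "Theta tau \<alpha> st = {s'. \<exists>s \<in> st. tau \<alpha> s = Some s'}"

definition Lset :: "('ag \<Rightarrow> 's \<Rightarrow> 'l) \<Rightarrow> 'ag \<Rightarrow> 's set \<Rightarrow> 'l set" where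
  "Lset l a st = l a ` st"

inductive tstep :: "('s \<Rightarrow> 't) \<Rightarrow> ('act \<Rightarrow> 'aact) \<Rightarrow> ('act \<Rightarrow> 's \<Rightarrow> 's option)
    \<Rightarrow> ('t, 'aact, 'ag) apath \<times> 's set \<Rightarrow> ('t, 'aact, 'ag) apath \<times> 's set \<Rightarrow> bool"
  for h hA tau where
  "tstep h hA tau ((st, (Temp a, st') # p), S)
      ((st', p), (\<Union>\<alpha> \<in> hA -` {a}. Theta tau \<alpha> S) \<inter> h -` {st'})"

abbreviation tstar where "tstar h hA tau \<equiv> (tstep h hA tau)\<^sup>*\<^sup>*"

text \<open>Rule EpistemicCheck, with witness set W = all temporal paths of the
abstract system from an abstract initial state to st'.\<close>
definition epi_target :: "'s set \<Rightarrow> ('s \<Rightarrow> 't) \<Rightarrow> ('act \<Rightarrow> 'aact) \<Rightarrow> ('act \<Rightarrow> 's \<Rightarrow> 's option)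
    \<Rightarrow> 't set \<Rightarrow> ('aact \<Rightarrow> 't \<Rightarrow> 't option) \<Rightarrow> ('ag \<Rightarrow> 't \<Rightarrow> 'lt) \<Rightarrow> 't \<Rightarrow> 's set" where
  "epi_target S0 h hA tau S0t taut lt st' =
     \<Union>{X. \<exists>p \<in> temporal_paths S0t taut lt st'.
            tstar h hA tau (p, S0 \<inter> h -` {fst p}) ((st', []), X)}"

inductive estep :: "'s set \<Rightarrow> ('s \<Rightarrow> 't) \<Rightarrow> ('act \<Rightarrow> 'aact) \<Rightarrow> ('act \<Rightarrow> 's \<Rightarrow> 's option)
    \<Rightarrow> ('ag \<Rightarrow> 's \<Rightarrow> 'l) \<Rightarrow> 't set \<Rightarrow> ('aact \<Rightarrow> 't \<Rightarrow> 't option) \<Rightarrow> ('ag \<Rightarrow> 't \<Rightarrow> 'lt)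
    \<Rightarrow> ('t, 'aact, 'ag) apath \<times> 's set \<Rightarrow> ('t, 'aact, 'ag) apath \<times> 's set \<Rightarrow> bool"
  for S0 h hA tau l S0t taut lt where
  "estep S0 h hA tau l S0t taut lt ((st, (Epi a, st') # p), S)
      ((st', p), {s \<in> epi_target S0 h hA tau S0t taut lt st'. l a s \<in> Lset l a S})"

definition cstep where
  "cstep S0 h hA tau l S0t taut lt x y \<longleftrightarrow>
     tstep h hA tau x y \<or> estep S0 h hA tau l S0t taut lt x y"

abbreviation cstar where
  "cstar S0 h hA tau l S0t taut lt \<equiv> (cstep S0 h hA tau l S0t taut lt)\<^sup>*\<^sup>*"

end

theory Submission
  imports Defs
begin

lemma valid_path_snoc:
  "valid_path taut lt t (es @ [(Temp a, t')]) =
   (valid_path taut lt t es \<and> taut a (last (path_states (t, es))) = Some t')"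
proof (induction es arbitrary: t)
  case Nil then show ?case by (simp add: path_states_def)
next
  case (Cons e es)
  obtain lab u where e: "e = (lab, u)" by fastforce
  show ?case using Cons by (cases lab) (auto simp: e path_states_def)
qed

lemma tstep_append:
  "tstep h hA tau x y \<Longrightarrow> tstep h hA tau ((fst (fst x), snd (fst x) @ r), snd x)
       ((fst (fst y), snd (fst y) @ r), snd y)"
  by (induction rule: tstep.induct) (simp add: tstep.intros)

lemma tstar_append:
  assumes "tstar h hA tau x y"
  shows "tstar h hA tau ((fst (fst x), snd (fst x) @ r), snd x)
       ((fst (fst y), snd (fst y) @ r), snd y)"
  using assms
proof (induction rule: rtranclp_induct)
  case base then show ?case by simp
next
  case (step y z)
  then show ?case using tstep_append[OF step(2), of r]
    by (meson rtranclp.rtrancl_into_rtrancl)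
qed

lemma reach_path:
  assumes "s \<in> reachable S0 tau"
    and compat_trans: "\<And>\<alpha> s s'. tau \<alpha> s = Some s' \<Longrightarrow> taut (hA \<alpha>) (h s) = Some (h s')"
  shows "\<exists>s0\<in>S0. \<exists>es. valid_path taut lt (h s0) es \<and> (\<forall>e\<in>set es. \<exists>a. fst e = Temp a)
     \<and> last (path_states (h s0, es)) = h s
     \<and> (\<exists>X. tstar h hA tau ((h s0, es), S0 \<inter> h -` {h s0}) ((h s, []), X) \<and> s \<in> X)"
  using assms(1)
proof (induction rule: reachable.induct)
  case (init s)
  show ?case
    by (rule bexI[OF _ init], rule exI[of _ "[]"], auto simp: path_states_def init)
next
  case (step s \<alpha> s')
  then obtain s0 es X where s0: "s0 \<in> S0" and v: "valid_path taut lt (h s0) es"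
    and t: "\<forall>e\<in>set es. \<exists>a. fst e = Temp a" and l: "last (path_states (h s0, es)) = h s"
    and ts: "tstar h hA tau ((h s0, es), S0 \<inter> h -` {h s0}) ((h s, []), X)" and sX: "s \<in> X"
    by blast
  define es' where "es' = es @ [(Temp (hA \<alpha>), h s')]"
  have v': "valid_path taut lt (h s0) es'"
    unfolding es'_def using v l compat_trans[OF step(2)] by (simp add: valid_path_snoc)
  have t': "\<forall>e\<in>set es'. \<exists>a. fst e = Temp a" using t by (auto simp: es'_def)
  have l': "last (path_states (h s0, es')) = h s'" by (simp add: es'_def path_states_def)
  have ts1: "tstar h hA tau ((h s0, es'), S0 \<inter> h -` {h s0}) ((h s, [(Temp (hA \<alpha>), h s')]), X)"
    using tstar_append[OF ts, of "[(Temp (hA \<alpha>), h s')]"] by (simp add: es'_def)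
  define Y where "Y = (\<Union>\<beta> \<in> hA -` {hA \<alpha>}. Theta tau \<beta> X) \<inter> h -` {h s'}"
  have st: "tstep h hA tau ((h s, [(Temp (hA \<alpha>), h s')]), X) ((h s', []), Y)"
    unfolding Y_def by (rule tstep.intros)
  have "s' \<in> Y" unfolding Y_def Theta_def using sX step(2) by blast
  then show ?case using s0 v' t' l' ts1 st
    by (meson rtranclp.rtrancl_into_rtrancl)
qed

lemma main:
  fixes S0 :: "'s set" and tau :: "'act \<Rightarrow> 's \<Rightarrow> 's option" and l :: "'ag \<Rightarrow> 's \<Rightarrow> 'l"
    and S0t :: "'t set" and taut :: "'aact \<Rightarrow> 't \<Rightarrow> 't option" and lt :: "'ag \<Rightarrow> 't \<Rightarrow> 'lt"
    and h :: "'s \<Rightarrow> 't" and hA :: "'act \<Rightarrow> 'aact"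
    and st1 :: 't and es :: "(('aact, 'ag) elabel \<times> 't) list"
    and ss :: "'s list" and S1 :: "'s set"
  assumes compat_init: "h ` S0 \<subseteq> S0t"
    and compat_trans: "\<And>\<alpha> s s'. tau \<alpha> s = Some s' \<Longrightarrow> taut (hA \<alpha>) (h s) = Some (h s')"
  shows "valid_path taut lt st1 es \<Longrightarrow> length ss = length es + 1 \<Longrightarrow>
    (\<And>k. k < length ss \<Longrightarrow> h (ss ! k) = path_states (st1, es) ! k) \<Longrightarrow>
    (\<And>k a. k < length es \<Longrightarrow> fst (es ! k) = Temp a \<Longrightarrow>
                       \<exists>\<alpha>. hA \<alpha> = a \<and> tau \<alpha> (ss ! k) = Some (ss ! (k + 1))) \<Longrightarrow>
    (\<And>k ag. k < length es \<Longrightarrow> fst (es ! k) = Epi ag \<Longrightarrow>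
                       l ag (ss ! k) = l ag (ss ! (k + 1)) \<and> ss ! (k + 1) \<in> reachable S0 tau) \<Longrightarrow>
    ss ! 0 \<in> S1 \<Longrightarrow>
   \<exists>Sn. cstar S0 h hA tau l S0t taut lt ((st1, es), S1)
                ((last (path_states (st1, es)), []), Sn)
            \<and> last ss \<in> Sn"
proof (induction es arbitrary: st1 ss S1)
  case Nil
  then obtain s where "ss = [s]" by (cases ss) auto
  then show ?case using Nil by (auto simp: path_states_def)
next
  case (Cons e es)
  obtain lab t where e: "e = (lab, t)" by fastforce
  obtain s0 ss' where ss: "ss = s0 # ss'" using Cons.prems(2) by (cases ss) auto
  have len': "length ss' = length es + 1" using Cons.prems(2) ss by simp
  have abs': "\<And>k. k < length ss' \<Longrightarrow> h (ss' ! k) = path_states (t, es) ! k"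
    using Cons.prems(3)[of "Suc _"] ss e by (auto simp: path_states_def)
  have temp': "\<And>k a. k < length es \<Longrightarrow> fst (es ! k) = Temp a \<Longrightarrow>
                       \<exists>\<alpha>. hA \<alpha> = a \<and> tau \<alpha> (ss' ! k) = Some (ss' ! (k + 1))"
    using Cons.prems(4)[of "Suc _"] ss by auto
  have epi': "\<And>k ag. k < length es \<Longrightarrow> fst (es ! k) = Epi ag \<Longrightarrow>
                       l ag (ss' ! k) = l ag (ss' ! (k + 1)) \<and> ss' ! (k + 1) \<in> reachable S0 tau"
    using Cons.prems(5)[of "Suc _"] ss by auto
  have h1: "h (ss' ! 0) = t" using Cons.prems(3)[of 1] ss e len' by (simp add: path_states_def)
  have lastp: "last (path_states (st1, e # es)) = last (path_states (t, es))"
    by (simp add: path_states_def e)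
  have lastss: "last ss = last ss'" using ss len' by auto
  have s0S: "s0 \<in> S1" using Cons.prems(6) ss by simp
  show ?case
  proof (cases lab)
    case (Temp a)
    have vp: "valid_path taut lt t es" using Cons.prems(1) e Temp by simp
    obtain \<alpha> where \<alpha>: "hA \<alpha> = a" "tau \<alpha> s0 = Some (ss' ! 0)"
      using Cons.prems(4)[of 0 a] ss e Temp by auto
    define S2 where "S2 = (\<Union>\<beta> \<in> hA -` {a}. Theta tau \<beta> S1) \<inter> h -` {t}"
    have st: "cstep S0 h hA tau l S0t taut lt ((st1, e # es), S1) ((t, es), S2)"
      unfolding cstep_def S2_def e Temp by (simp add: tstep.intros)
    have "ss' ! 0 \<in> S2" unfolding S2_def Theta_def using \<alpha> s0S h1 by blast
    from Cons.IH[OF vp len' abs' temp' epi' this] obtain Sn where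
      "cstar S0 h hA tau l S0t taut lt ((t, es), S2) ((last (path_states (t, es)), []), Sn)"
      "last ss' \<in> Sn" by blast
    then show ?thesis using st lastp lastss
      by (metis converse_rtranclp_into_rtranclp)
  next
    case (Epi ag)
    have vp: "valid_path taut lt t es" using Cons.prems(1) e Epi by simp
    have le: "l ag s0 = l ag (ss' ! 0)" and re: "ss' ! 0 \<in> reachable S0 tau"
      using Cons.prems(5)[of 0 ag] ss e Epi by auto
    define S2 where "S2 = {s \<in> epi_target S0 h hA tau S0t taut lt t. l ag s \<in> Lset l ag S1}"
    have st: "cstep S0 h hA tau l S0t taut lt ((st1, e # es), S1) ((t, es), S2)"
      unfolding cstep_def S2_def e Epi by (simp add: estep.intros)
    from reach_path[where ?S0.0=S0 and tau=tau and h=h and hA=hA and taut=taut and lt=lt, OF re compat_trans] obtain s0' es0 X where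
      s0': "s0' \<in> S0" and v: "valid_path taut lt (h s0') es0"
      and tt: "\<forall>e\<in>set es0. \<exists>a. fst e = Temp a" and ll: "last (path_states (h s0', es0)) = t"
      and ts: "tstar h hA tau ((h s0', es0), S0 \<inter> h -` {h s0'}) ((t, []), X)"
      and sX: "ss' ! 0 \<in> X"
      using h1 by metis
    have "(h s0', es0) \<in> temporal_paths S0t taut lt t"
      unfolding temporal_paths_def using s0' compat_init v tt ll by auto
    then have "X \<in> {X. \<exists>p \<in> temporal_paths S0t taut lt t.
            tstar h hA tau (p, S0 \<inter> h -` {fst p}) ((t, []), X)}"
      using ts by (intro CollectI bexI[of _ "(h s0', es0)"]) simp_all
    then have "ss' ! 0 \<in> epi_target S0 h hA tau S0t taut lt t"
      unfolding epi_target_def using sX by (rule UnionI)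
    moreover have "l ag (ss' ! 0) \<in> l ag ` S1" using imageI[OF s0S, of "l ag"] le by simp
    ultimately have "ss' ! 0 \<in> S2" unfolding S2_def Lset_def by blast
    from Cons.IH[OF vp len' abs' temp' epi' this] obtain Sn where
      "cstar S0 h hA tau l S0t taut lt ((t, es), S2) ((last (path_states (t, es)), []), Sn)"
      "last ss' \<in> Sn" by blast
    then show ?thesis using st lastp lastss
      by (metis converse_rtranclp_into_rtranclp)
  qed
qed

theorem proposition5:
  fixes S0 :: "'s set" and tau :: "'act \<Rightarrow> 's \<Rightarrow> 's option" and l :: "'ag \<Rightarrow> 's \<Rightarrow> 'l"
    and S0t :: "'t set" and taut :: "'aact \<Rightarrow> 't \<Rightarrow> 't option" and lt :: "'ag \<Rightarrow> 't \<Rightarrow> 'lt"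
    and h :: "'s \<Rightarrow> 't" and hA :: "'act \<Rightarrow> 'aact"
    and st1 :: 't and es :: "(('aact, 'ag) elabel \<times> 't) list"
    and ss :: "'s list" and S1 :: "'s set"
  assumes compat_init: "h ` S0 \<subseteq> S0t"
    and compat_trans: "\<And>\<alpha> s s'. tau \<alpha> s = Some s' \<Longrightarrow> taut (hA \<alpha>) (h s) = Some (h s')"
    and path: "valid_path taut lt st1 es"
    and len: "length ss = length es + 1"
    and abs: "\<And>k. k < length ss \<Longrightarrow> h (ss ! k) = path_states (st1, es) ! k"
    and temp_edges: "\<And>k a. k < length es \<Longrightarrow> fst (es ! k) = Temp a \<Longrightarrow>
                       \<exists>\<alpha>. hA \<alpha> = a \<and> tau \<alpha> (ss ! k) = Some (ss ! (k + 1))"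
    and epi_edges: "\<And>k ag. k < length es \<Longrightarrow> fst (es ! k) = Epi ag \<Longrightarrow>
                       l ag (ss ! k) = l ag (ss ! (k + 1)) \<and> ss ! (k + 1) \<in> reachable S0 tau"
    and mem: "ss ! 0 \<in> S1"
    and sub: "S1 \<subseteq> h -` {st1}"
  shows "\<exists>Sn. cstar S0 h hA tau l S0t taut lt ((st1, es), S1)
                ((last (path_states (st1, es)), []), Sn)
            \<and> last ss \<in> Sn \<and> Sn \<noteq> {}"
proof -
  have "\<exists>Sn. cstar S0 h hA tau l S0t taut lt ((st1, es), S1)
                ((last (path_states (st1, es)), []), Sn) \<and> last ss \<in> Sn"
    by (rule main[where ?S0.0=S0 and tau=tau and h=h and hA=hA and taut=taut and lt=lt and l=l and S0t=S0t and ?st1.0=st1 and ?es=es and ?ss=ss and ?S1.0=S1, OF compat_init compat_trans path len abs temp_edges epi_edges mem])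
  then show ?thesis by blast
qed

end
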